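(* Let $H$ be a one-dimensional summable Hamiltonian. Then for every $k\in\mathbb{N}$ (with $k\ge1$) and every $X\in\{0,1\}^{\mathbb{Z}}$, $$\rho_H(X)=\liminf_{m\to\infty}\frac{H(X([-mk,mk]))}{2mk+1}.$$
   Context: A pattern is a configuration in $\{0,1\}^A$ on a finite set $A\subset\mathbb{Z}$; a one-dimensional Hamiltonian is a translation-invariant assignment of energies $\Phi(p)$ to patterns $p$, and for a finite segment $w$ of a sequence, $H(w)$ is the total energy of all patterns occurring within $w$. $H$ is summable if there is $M>0$ such that for every $i\in\mathbb{Z}$, $\sum_{p\in P_i}|\Phi(p)|<M$, where $P_i$ is the set of finite patterns whose support contains the coordinate $i$. The energy density is $\rho_H(X)=\liminf_{n\to\infty}\frac{H(X([-n,n]))}{2n+1}$, where $X([-n,n])=(X(i))_{i=-n}^n$. *)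

theory Defs
  imports "HOL-Analysis.Analysis"
begin

text \<open>A pattern is a pair (A, c): a finite nonempty support A of integers and a
  configuration c on A with values in {0,1} (encoded as bool); c is normalised
  to be False outside A so that each pattern has a unique representation.\<close>

type_synonym pattern = "int set \<times> (int \<Rightarrow> bool)"

definition is_pattern :: "pattern \<Rightarrow> bool" where
  "is_pattern p \<longleftrightarrow> finite (fst p) \<and> fst p \<noteq> {} \<and> (\<forall>i. i \<notin> fst p \<longrightarrow> \<not> snd p i)"

definition shift_pattern :: "int \<Rightarrow> pattern \<Rightarrow> pattern" where
  "shift_pattern t p = ((\<lambda>i. i + t) ` fst p, (\<lambda>i. snd p (i - t)))"

definition translation_invariant :: "(pattern \<Rightarrow> real) \<Rightarrow> bool" where
  "translation_invariant \<Phi> \<longleftrightarrow> (\<forall>p t. is_pattern p \<longrightarrow> \<Phi> (shift_pattern t p) = \<Phi> p)"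

definition patterns_at :: "int \<Rightarrow> pattern set" where
  "patterns_at i = {p. is_pattern p \<and> i \<in> fst p}"

definition summable_hamiltonian :: "(pattern \<Rightarrow> real) \<Rightarrow> bool" where
  "summable_hamiltonian \<Phi> \<longleftrightarrow>
     (\<exists>M>0. \<forall>i. (\<lambda>p. \<bar>\<Phi> p\<bar>) summable_on patterns_at i
              \<and> (\<Sum>\<^sub>\<infinity>p\<in>patterns_at i. \<bar>\<Phi> p\<bar>) < M)"

definition restr_pattern :: "(int \<Rightarrow> bool) \<Rightarrow> int set \<Rightarrow> pattern" where
  "restr_pattern X A = (A, (\<lambda>i. if i \<in> A then X i else False))"

text \<open>H(X([a,b])): total energy of all patterns occurring within the segment X([a,b]),
  i.e. the patterns X restricted to nonempty subsets of {a..b}.\<close>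

definition H_seg :: "(pattern \<Rightarrow> real) \<Rightarrow> (int \<Rightarrow> bool) \<Rightarrow> int \<Rightarrow> int \<Rightarrow> real" where
  "H_seg \<Phi> X a b = (\<Sum>A \<in> Pow {a..b} - {{}}. \<Phi> (restr_pattern X A))"

definition energy_density :: "(pattern \<Rightarrow> real) \<Rightarrow> (int \<Rightarrow> bool) \<Rightarrow> ereal" where
  "energy_density \<Phi> X =
     Liminf sequentially (\<lambda>n::nat. ereal (H_seg \<Phi> X (- int n) (int n) / (2 * real n + 1)))"

end

theory Submission
  imports Defs
begin

lemma sum_bound:
  fixes \<Phi> :: "pattern \<Rightarrow> real" and M :: real
  assumes S: "\<And>i. (\<lambda>p. \<bar>\<Phi> p\<bar>) summable_on patterns_at i \<and> (\<Sum>\<^sub>\<infinity>p\<in>patterns_at i. \<bar>\<Phi> p\<bar>) < M"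
    and fD: "finite D" and fI: "finite I" and DA: "\<And>A. A \<in> D \<Longrightarrow> finite A \<and> A \<inter> I \<noteq> {}"
  shows "(\<Sum>A\<in>D. \<bar>\<Phi> (restr_pattern X A)\<bar>) \<le> real (card I) * M"
proof -
  define f where "f A = \<bar>\<Phi> (restr_pattern X A)\<bar>" for A
  have "(\<Sum>A\<in>D. f A) \<le> (\<Sum>A\<in>D. \<Sum>i\<in>I\<inter>A. f A)"
  proof (rule sum_mono)
    fix A assume "A \<in> D"
    then have "card (I \<inter> A) \<ge> 1" using DA fI
      by (metis Int_commute card_0_eq finite_Int less_one linorder_not_le)
    moreover have "f A \<ge> 0" by (simp add: f_def)
    ultimately show "f A \<le> (\<Sum>i\<in>I\<inter>A. f A)"
      by (simp add: mult_le_cancel_right1)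
  qed
  also have "\<dots> = (\<Sum>A\<in>D. \<Sum>i\<in>I. if i \<in> A then f A else 0)"
    by (rule sum.cong[OF refl], rule sum.inter_restrict[OF fI])
  also have "\<dots> = (\<Sum>i\<in>I. \<Sum>A\<in>D. if i \<in> A then f A else 0)"
    by (rule sum.swap)
  also have "\<dots> = (\<Sum>i\<in>I. \<Sum>A\<in>{A\<in>D. i \<in> A}. f A)"
    by (simp add: sum.inter_filter[OF fD])
  also have "\<dots> \<le> (\<Sum>i\<in>I. M)"
  proof (rule sum_mono)
    fix i assume "i \<in> I"
    have inj: "inj_on (restr_pattern X) {A\<in>D. i \<in> A}"
      by (rule inj_onI) (metis fst_conv restr_pattern_def)
    have "(\<Sum>A\<in>{A\<in>D. i \<in> A}. f A) = (\<Sum>p\<in>restr_pattern X ` {A\<in>D. i \<in> A}. \<bar>\<Phi> p\<bar>)"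
      by (simp add: sum.reindex[OF inj] f_def)
    also have "\<dots> \<le> (\<Sum>\<^sub>\<infinity>p\<in>patterns_at i. \<bar>\<Phi> p\<bar>)"
    proof (rule finite_sum_le_infsum)
      show "(\<lambda>p. \<bar>\<Phi> p\<bar>) summable_on patterns_at i" using S by blast
      show "finite (restr_pattern X ` {A \<in> D. i \<in> A})" using fD by simp
      show "restr_pattern X ` {A \<in> D. i \<in> A} \<subseteq> patterns_at i"
        using DA by (auto simp: patterns_at_def is_pattern_def restr_pattern_def)
    qed simp
    also have "\<dots> \<le> M" using S less_imp_le by blast
    finally show "(\<Sum>A\<in>{A\<in>D. i \<in> A}. f A) \<le> M" .
  qed
  finally show ?thesis by (simp add: f_def)
qed

lemma h_bound:
  fixes \<Phi> :: "pattern \<Rightarrow> real" and M :: real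
  assumes S: "\<And>i. (\<lambda>p. \<bar>\<Phi> p\<bar>) summable_on patterns_at i \<and> (\<Sum>\<^sub>\<infinity>p\<in>patterns_at i. \<bar>\<Phi> p\<bar>) < M"
  shows "\<bar>H_seg \<Phi> X (- int n) (int n)\<bar> \<le> (2 * real n + 1) * M"
proof -
  have "\<bar>H_seg \<Phi> X (- int n) (int n)\<bar> \<le> (\<Sum>A\<in>Pow {- int n..int n} - {{}}. \<bar>\<Phi> (restr_pattern X A)\<bar>)"
    unfolding H_seg_def by (rule sum_abs)
  also have "\<dots> \<le> real (card {- int n..int n}) * M"
    by (rule sum_bound[OF S]) (auto intro: finite_subset)
  also have "real (card {- int n..int n}) = 2 * real n + 1" by simp
  finally show ?thesis .
qed

lemma h_diff:
  fixes \<Phi> :: "pattern \<Rightarrow> real" and M :: real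
  assumes S: "\<And>i. (\<lambda>p. \<bar>\<Phi> p\<bar>) summable_on patterns_at i \<and> (\<Sum>\<^sub>\<infinity>p\<in>patterns_at i. \<bar>\<Phi> p\<bar>) < M"
    and le: "n \<le> n'"
  shows "\<bar>H_seg \<Phi> X (- int n') (int n') - H_seg \<Phi> X (- int n) (int n)\<bar> \<le> 2 * (real n' - real n) * M"
proof -
  let ?B = "Pow {- int n'..int n'} - {{}}" and ?C = "Pow {- int n..int n} - {{}}"
  have sub: "?C \<subseteq> ?B" using le by auto
  have "H_seg \<Phi> X (- int n') (int n') - H_seg \<Phi> X (- int n) (int n)
      = (\<Sum>A\<in>?B - ?C. \<Phi> (restr_pattern X A))"
    unfolding H_seg_def by (simp add: sum_diff[OF _ sub])
  then have "\<bar>H_seg \<Phi> X (- int n') (int n') - H_seg \<Phi> X (- int n) (int n)\<bar>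
      \<le> (\<Sum>A\<in>?B - ?C. \<bar>\<Phi> (restr_pattern X A)\<bar>)"
    by (simp add: sum_abs)
  also have "\<dots> \<le> real (card ({- int n'..int n'} - {- int n..int n})) * M"
    by (rule sum_bound[OF S]) (auto intro: finite_subset)
  also have "real (card ({- int n'..int n'} - {- int n..int n})) = 2 * (real n' - real n)"
  proof -
    have "{- int n..int n} \<subseteq> {- int n'..int n'}" using le by auto
    then have "card ({- int n'..int n'} - {- int n..int n}) = card {- int n'..int n'} - card {- int n..int n}"
      by (simp add: card_Diff_subset)
    then show ?thesis using le by simp
  qed
  finally show ?thesis .
qed

lemma eventually_div:
  assumes "(k::nat) \<ge> 1"
  shows "eventually (\<lambda>n. P (n div k)) sequentially \<longleftrightarrow> eventually P sequentially"
proof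
  assume "eventually (\<lambda>n. P (n div k)) sequentially"
  then obtain N where N: "\<And>n. n \<ge> N \<Longrightarrow> P (n div k)" by (auto simp: eventually_sequentially)
  have "P m" if "m \<ge> N" for m
  proof -
    have "m * k \<ge> N" using that assms by (metis le_trans mult_le_mono2 nat_mult_1_right)
    then show ?thesis using N[of "m*k"] assms by simp
  qed
  then show "eventually P sequentially" by (auto simp: eventually_sequentially)
next
  assume "eventually P sequentially"
  then obtain N where N: "\<And>n. n \<ge> N \<Longrightarrow> P n" by (auto simp: eventually_sequentially)
  have "P (n div k)" if "n \<ge> N * k" for n
  proof -
    have "n div k \<ge> N" using that assms
      by (metis div_le_mono div_mult_self_is_m less_le_trans zero_less_one)
    then show ?thesis using N by simp
  qed
  then show "eventually (\<lambda>n. P (n div k)) sequentially" by (auto simp: eventually_sequentially)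
qed

lemma liminf_div:
  fixes B :: "nat \<Rightarrow> ereal"
  assumes "(k::nat) \<ge> 1"
  shows "liminf (\<lambda>n. B (n div k)) = liminf B"
proof -
  have "C \<le> liminf (\<lambda>n. B (n div k)) \<longleftrightarrow> C \<le> liminf B" for C
    unfolding le_Liminf_iff using eventually_div[OF assms, of "\<lambda>m. _ < B m"] by simp
  then show ?thesis by (metis order_antisym order_refl)
qed

lemma real_ineq:
  fixes x y N J K M :: real
  assumes "\<bar>x - y\<bar> \<le> 2 * (N - J) * M" "\<bar>y\<bar> \<le> (2 * J + 1) * M" "0 \<le> J" "J \<le> N" "N - J \<le> K" "M > 0"
  shows "\<bar>x / (2 * N + 1) - y / (2 * J + 1)\<bar> \<le> 4 * K * M / (2 * N + 1)"
proof -
  have pN: "2 * N + 1 > 0" and pJ: "2 * J + 1 > 0" using assms by auto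
  define u where "u = y / (2 * J + 1)"
  have yu: "y = u * (2 * J + 1)" using pJ by (simp add: u_def)
  have eq: "x / (2 * N + 1) - u = ((x - y) - u * (2 * (N - J))) / (2 * N + 1)"
  proof -
    have e1: "(x - y) - u * (2 * (N - J)) = x - u * (2 * N + 1)" unfolding yu by (simp add: algebra_simps)
    show ?thesis unfolding e1 using pN by (simp add: diff_divide_distrib)
  qed
  have y1: "\<bar>u\<bar> \<le> M"
  proof -
    have "\<bar>u\<bar> = \<bar>y\<bar> / (2 * J + 1)" using pJ by (simp add: u_def)
    also have "\<dots> \<le> M" unfolding pos_divide_le_eq[OF pJ] using assms(2) by (simp only: mult.commute)
    finally show ?thesis .
  qed
  have "\<bar>u * (2 * (N - J))\<bar> \<le> M * (2 * (N - J))"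
    using y1 assms(4) by (simp add: abs_mult mult_right_mono)
  moreover have "2 * (N - J) * M \<le> 2 * K * M" using assms(5,6) by simp
  ultimately have "\<bar>(x - y) - u * (2 * (N - J))\<bar> \<le> 4 * K * M"
    using assms(1) abs_triangle_ineq4[of "x - y" "u * (2 * (N - J))"] mult.commute[of M "2 * (N - J)"] by linarith
  then have "\<bar>(x - y) - u * (2 * (N - J))\<bar> / (2 * N + 1) \<le> 4 * K * M / (2 * N + 1)"
    using pN by (rule divide_right_mono[OF _ less_imp_le])
  moreover have "\<bar>x / (2 * N + 1) - u\<bar> = \<bar>(x - y) - u * (2 * (N - J))\<bar> / (2 * N + 1)"
    unfolding eq using pN by simp
  ultimately show ?thesis unfolding u_def by simp
qed

theorem lemma4p6:
  fixes \<Phi> :: "pattern \<Rightarrow> real" and k :: nat and X :: "int \<Rightarrow> bool"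
  assumes "translation_invariant \<Phi>"
    and "summable_hamiltonian \<Phi>"
    and "k \<ge> 1"
  shows "energy_density \<Phi> X =
    Liminf sequentially (\<lambda>m::nat. ereal (H_seg \<Phi> X (- int (m * k)) (int (m * k))
                                          / (2 * real (m * k) + 1)))"
proof -
  obtain M where M: "M > 0" and S: "\<And>i. (\<lambda>p. \<bar>\<Phi> p\<bar>) summable_on patterns_at i \<and> (\<Sum>\<^sub>\<infinity>p\<in>patterns_at i. \<bar>\<Phi> p\<bar>) < M"
    using assms(2) unfolding summable_hamiltonian_def by blast
  define a where "a n = H_seg \<Phi> X (- int n) (int n) / (2 * real n + 1)" for n
  define e where "e n = a n - a (n div k * k)" for n
  have bnd: "\<bar>e n\<bar> \<le> 4 * real k * M / (2 * real n + 1)" for n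
  proof -
    let ?j = "n div k * k"
    have jn: "?j \<le> n" by simp
    have nj: "n - ?j < k" using assms(3)
      by (metis add_diff_cancel_left' div_mult_mod_eq mod_less_divisor less_le_trans zero_less_one add.commute)
    have jn1: "real (n div k) * real k \<le> real n" using jn by (metis of_nat_le_iff of_nat_mult)
    have "n < k + n div k * k" using nj jn by linarith
    then have "real n < real k + real (n div k) * real k" by (metis of_nat_less_iff of_nat_add of_nat_mult)
    then have nj1: "real n - real (n div k) * real k \<le> real k" by linarith
    show ?thesis unfolding e_def a_def
      apply (rule real_ineq[OF h_diff[OF S jn] h_bound[OF S]])
      using jn1 nj1 M by auto
  qed
  have ev: "eventually (\<lambda>n. norm (e n) \<le> 4 * real k * M / real n) sequentially"
  proof (rule eventually_sequentiallyI[of 1])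
    fix n :: nat assume "n \<ge> 1"
    have "4 * real k * M / (2 * real n + 1) \<le> 4 * real k * M / real n"
      using M \<open>n \<ge> 1\<close> by (intro divide_left_mono) auto
    then show "norm (e n) \<le> 4 * real k * M / real n" using bnd[of n] by simp
  qed
  have e0: "e \<longlonglongrightarrow> 0"
    by (rule Lim_null_comparison[OF ev lim_const_over_n])
  have "liminf (\<lambda>n. ereal (a n)) = liminf (\<lambda>n. ereal (e n) + ereal (a (n div k * k)))"
    by (simp add: e_def)
  also have "\<dots> = 0 + liminf (\<lambda>n. ereal (a (n div k * k)))"
    by (rule ereal_liminf_lim_add) (use e0 in \<open>auto simp: zero_ereal_def intro: tendsto_ereal\<close>)
  also have "\<dots> = liminf (\<lambda>m. ereal (a (m * k)))"
    using liminf_div[OF assms(3), of "\<lambda>m. ereal (a (m * k))"] by simp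
  finally show ?thesis unfolding energy_density_def a_def .
qed

end
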